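(* Let $1\le p\le q$ and let $\mu=(a_1,\dots,a_p\mid b_1,\dots,b_q)\in\mathbb{Z}^{p+q}$ be $\Delta^+(\mathfrak{k},\mathfrak{t})$-dominant and u-large, such that $\mu-\beta$ is also $\Delta^+(\mathfrak{k},\mathfrak{t})$-dominant. (a) If $b_1\ge 2p+1$, then $\|\mu\|_{\mathrm{spin}}>\|\mu-\beta\|_{\mathrm{spin}}$. (b) If $a_1\ge 2q+1$, then $\|\mu\|_{\mathrm{spin}}>\|\mu-\beta\|_{\mathrm{spin}}$.
   Context: Weights are vectors in $\mathbb{R}^n$, $n=p+q$, written $(x_1,\dots,x_p\mid y_1,\dots,y_q)$, with Euclidean norm $\|\cdot\|$. $\rho_c=(p,p-1,\dots,1\mid q,q-1,\dots,1)$, $\beta=(1,0,\dots,0\mid1,0,\dots,0)$. $\Delta^+(\mathfrak{k},\mathfrak{t})$-dominant means $x_1\ge\cdots\ge x_p\ge0$ and $y_1\ge\cdots\ge y_q\ge0$. For $\nu\in\mathbb{Z}^n$, $\{\nu\}$ is obtained by taking absolute values of all coordinates and sorting the first $p$ and the last $q$ coordinates separately in decreasing order; $\|\nu\|_{\mathfrak{k}}:=\|\{\nu\}+\rho_c\|$. $\Omega_{p,q}$ is the set of $(x\mid y)\in\mathbb{Z}^n$ with $q\ge x_1\ge\cdots\ge x_p\ge0$ and $y_j=\#\{i\mid q-x_i\ge j\}$ ($1\le j\le q$). Spin norm: $\|\nu\|_{\mathrm{spin}}=\min_{\tau\in\Omega_{p,q}}\|\nu-\tau\|_{\mathfrak{k}}$.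 $\mu$ is u-large iff there exist $0\le f\le p$, $0\le g\le q$ with $\sum_{i=1}^f a_i+\sum_{j=1}^g b_j>2pq-2(p-f)(q-g)$. *)

theory Defs
  imports Complex_Main
begin

text \<open>A weight (x_1,...,x_p | y_1,...,y_q) in Z^(p+q) is represented as a pair of
  integer lists (xs, ys) with length xs = p and length ys = q; list index i
  corresponds to coordinate i+1.\<close>

type_synonym weight = "int list \<times> int list"

definition wadd :: "weight \<Rightarrow> weight \<Rightarrow> weight" where
  "wadd u v = (map2 (+) (fst u) (fst v), map2 (+) (snd u) (snd v))"

definition wsub :: "weight \<Rightarrow> weight \<Rightarrow> weight" where
  "wsub u v = (map2 (-) (fst u) (fst v), map2 (-) (snd u) (snd v))"

definition wnorm :: "weight \<Rightarrow> real" where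
  "wnorm v = sqrt (real_of_int (sum_list (map (\<lambda>x. x^2) (fst v)) + sum_list (map (\<lambda>x. x^2) (snd v))))"

definition rho_c :: "nat \<Rightarrow> nat \<Rightarrow> weight" where
  "rho_c p q = (map int (rev [1..<p+1]), map int (rev [1..<q+1]))"

definition beta :: "nat \<Rightarrow> nat \<Rightarrow> weight" where
  "beta p q = (1 # replicate (p - 1) 0, 1 # replicate (q - 1) 0)"

definition k_dominant :: "weight \<Rightarrow> bool" where
  "k_dominant v \<longleftrightarrow> sorted_wrt (\<ge>) (fst v) \<and> (\<forall>x\<in>set (fst v). x \<ge> 0)
                   \<and> sorted_wrt (\<ge>) (snd v) \<and> (\<forall>y\<in>set (snd v). y \<ge> 0)"

definition brace :: "weight \<Rightarrow> weight" where
  "brace v = (rev (sort (map abs (fst v))), rev (sort (map abs (snd v))))"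

definition knorm :: "nat \<Rightarrow> nat \<Rightarrow> weight \<Rightarrow> real" where
  "knorm p q v = wnorm (wadd (brace v) (rho_c p q))"

definition Omega :: "nat \<Rightarrow> nat \<Rightarrow> weight set" where
  "Omega p q = {(xs, ys). length xs = p \<and> length ys = q
      \<and> (\<forall>i<p. xs ! i \<le> int q \<and> xs ! i \<ge> 0) \<and> sorted_wrt (\<ge>) xs
      \<and> (\<forall>j\<in>{1..q}. ys ! (j - 1) = int (card {i. i < p \<and> int q - xs ! i \<ge> int j}))}"

definition spin_norm :: "nat \<Rightarrow> nat \<Rightarrow> weight \<Rightarrow> real" where
  "spin_norm p q v = Min ((\<lambda>\<tau>. knorm p q (wsub v \<tau>)) ` Omega p q)"

definition u_large :: "nat \<Rightarrow> nat \<Rightarrow> weight \<Rightarrow> bool" where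
  "u_large p q v \<longleftrightarrow> (\<exists>f\<le>p. \<exists>g\<le>q.
      sum_list (take f (fst v)) + sum_list (take g (snd v))
        > 2 * int p * int q - 2 * (int p - int f) * (int q - int g))"

end

theory Submission
  imports Defs "HOL-Library.Multiset"
begin


definition Gm :: "int multiset \<Rightarrow> int" where
  "Gm M = (\<Sum>x\<in>#M. x^2 + x) + (\<Sum>x\<in>#M. \<Sum>y\<in>#M. max x y)"

lemma Gm_add: "Gm (add_mset x M) = Gm M + x^2 + 2*x + 2*(\<Sum>y\<in>#M. max x y)"
proof -
  have "(\<Sum>z\<in>#M. max z x) = (\<Sum>y\<in>#M. max x y)"
    by (simp add: max.commute)
  moreover have "(\<Sum>z\<in>#M. max z x + (\<Sum>y\<in>#M. max z y)) = (\<Sum>z\<in>#M. max z x) + (\<Sum>z\<in>#M. \<Sum>y\<in>#M. max z y)"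
    by (simp add: sum_mset.distrib)
  ultimately show ?thesis unfolding Gm_def by (simp add: algebra_simps)
qed

lemma sorted_G:
  "sorted_wrt (\<ge>) c \<Longrightarrow>
   sum_list (map (\<lambda>z. z^2) (map2 (+) c (map int (rev [1..<length c + 1]))))
     = Gm (mset c) + (\<Sum>k=1..length c. int k^2)"
proof (induction c)
  case Nil
  then show ?case by (simp add: Gm_def)
next
  case (Cons x r)
  have mx: "(\<Sum>y\<in>#mset r. max x y) = int (length r) * x"
  proof -
    have "map (max x) r = map (\<lambda>_. x) r"
      using Cons.prems by (intro map_cong) (auto simp: max_def)
    then have "(\<Sum>y\<in>#mset r. max x y) = sum_list (map (\<lambda>_. x) r)"
      by (metis mset_map sum_mset_sum_list)
    then show ?thesis by (simp add: sum_list_triv)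
  qed
  have r: "rev [1..<length (x#r) + 1] = (length r + 1) # rev [1..<length r + 1]"
    by simp
  show ?case using Cons by (simp add: r Gm_add mx power2_eq_square algebra_simps)
qed

definition Tq :: "nat \<Rightarrow> int" where "Tq n = (\<Sum>k=1..n. int k^2)"

lemma brace_part:
  fixes u :: "int list"
  shows "sum_list (map (\<lambda>z. z^2) (map2 (+) (rev (sort (map abs u))) (map int (rev [1..<length u + 1]))))
     = Gm (mset (map abs u)) + Tq (length u)"
proof -
  let ?c = "rev (sort (map abs u))"
  have s: "sorted_wrt (\<ge>) ?c" by (simp add: sorted_wrt_rev)
  have l: "length ?c = length u" by simp
  have m: "mset ?c = mset (map abs u)" by simp
  show ?thesis using sorted_G[OF s] unfolding l m Tq_def .
qed

lemma knorm_eq: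
  assumes "length u = p" "length w = q"
  shows "knorm p q (u,w) = sqrt (of_int (Gm (mset (map abs u)) + Gm (mset (map abs w)) + Tq p + Tq q))"
  using brace_part[of u] brace_part[of w] assms
  unfolding knorm_def wnorm_def wadd_def brace_def rho_c_def
  by (simp add: algebra_simps)

lemma Gm_dec:
  assumes "1 \<le> x"
  shows "Gm (add_mset (x-1) M) < Gm (add_mset x M)"
proof -
  have "(\<Sum>y\<in>#M. max (x-1) y) \<le> (\<Sum>y\<in>#M. max x y)"
    by (rule sum_mset_mono) auto
  then show ?thesis using assms unfolding Gm_add by (simp add: power2_eq_square algebra_simps)
qed

lemma Gm_transfer:
  assumes "y + 1 \<le> x"
  shows "Gm (add_mset (x-1) (add_mset (y+1) R)) \<le> Gm (add_mset x (add_mset y R))"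
    and "y + 2 \<le> x \<Longrightarrow> Gm (add_mset (x-1) (add_mset (y+1) R)) < Gm (add_mset x (add_mset y R))"
proof -
  have S: "(\<Sum>z\<in>#R. max (x-1) z + max (y+1) z) \<le> (\<Sum>z\<in>#R. max x z + max y z)"
    by (rule sum_mset_mono) (use assms in auto)
  have S2: "(\<Sum>z\<in>#R. max (x-1) z) + (\<Sum>z\<in>#R. max (y+1) z) \<le> (\<Sum>z\<in>#R. max x z) + (\<Sum>z\<in>#R. max y z)"
    using S by (simp add: sum_mset.distrib)
  show "Gm (add_mset (x-1) (add_mset (y+1) R)) \<le> Gm (add_mset x (add_mset y R))"
  proof -
    have m1: "max x y = x" "max (x-1) (y+1) = y + 1 \<or> max (x-1) (y+1) = x - 1" using assms by auto
    have m2: "2*(max (x-1) (y+1)) \<le> 2*x" using assms by auto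
    show ?thesis using m1(2)
    proof
      assume "max (x-1) (y+1) = y + 1"
      then show ?thesis using S2 assms m1(1) unfolding Gm_add by (simp add: power2_eq_square algebra_simps)
    next
      assume "max (x-1) (y+1) = x - 1"
      then show ?thesis using S2 assms m1(1) unfolding Gm_add by (simp add: power2_eq_square algebra_simps)
    qed
  qed
  show "y + 2 \<le> x \<Longrightarrow> Gm (add_mset (x-1) (add_mset (y+1) R)) < Gm (add_mset x (add_mset y R))"
  proof -
    assume h: "y + 2 \<le> x"
    have m1: "max x y = x" "max (x-1) (y+1) = x - 1" using h by auto
    show ?thesis using S2 h m1 unfolding Gm_add by (simp add: power2_eq_square algebra_simps)
  qed
qed

lemma mset_nth_image: "mset L = image_mset (nth L) (mset_set {0..<length L})"
  by (metis map_nth mset_map mset_upt)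

lemma one_upd:
  assumes "length L' = length L" "i < length L" "\<forall>l<length L. l \<noteq> i \<longrightarrow> L'!l = L!l"
  shows "\<exists>R. mset L = add_mset (L!i) R \<and> mset L' = add_mset (L'!i) R"
proof -
  let ?A = "{0..<length L} - {i}"
  have e: "mset_set {0..<length L} = add_mset i (mset_set ?A)"
    using assms(2) by (simp add: mset_set.remove)
  have c: "image_mset (nth L') (mset_set ?A) = image_mset (nth L) (mset_set ?A)"
    using assms(3) by (intro image_mset_cong) auto
  show ?thesis
    using mset_nth_image[of L] mset_nth_image[of L'] e c assms(1) by auto
qed

lemma two_upd:
  assumes "length L' = length L" "i < length L" "j < length L" "i \<noteq> j"
    "\<forall>l<length L. l \<noteq> i \<longrightarrow> l \<noteq> j \<longrightarrow> L'!l = L!l"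
  shows "\<exists>R. mset L = add_mset (L!i) (add_mset (L!j) R) \<and> mset L' = add_mset (L'!i) (add_mset (L'!j) R)"
proof -
  let ?A = "{0..<length L} - {i} - {j}"
  have e: "mset_set {0..<length L} = add_mset i (add_mset j (mset_set ?A))"
    using assms(2,3,4) by (simp add: mset_set.remove)
  have c: "image_mset (nth L') (mset_set ?A) = image_mset (nth L) (mset_set ?A)"
    using assms(5) by (intro image_mset_cong) auto
  show ?thesis
    using mset_nth_image[of L] mset_nth_image[of L'] e c assms(1) by auto
qed



definition KK :: "int list \<Rightarrow> int list \<Rightarrow> int list \<Rightarrow> int list \<Rightarrow> int" where
  "KK a b x y = Gm (mset (map abs (map2 (-) a x))) + Gm (mset (map abs (map2 (-) b y)))"

lemma Omega_facts:
  assumes "(x,y) \<in> Omega p q"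
  shows "length x = p" "length y = q" "\<forall>i<p. 0 \<le> x!i \<and> x!i \<le> int q" "sorted_wrt (\<ge>) x"
    "\<forall>j\<in>{1..q}. y ! (j - 1) = int (card {i. i < p \<and> int q - x ! i \<ge> int j})"
  using assms unfolding Omega_def by auto

lemma y0_le:
  assumes "(x,y) \<in> Omega p q" "1 \<le> q"
  shows "y!0 \<le> int p" "0 \<le> y!0"
proof -
  have "y!0 = int (card {i. i < p \<and> int q - x ! i \<ge> 1})"
    using Omega_facts(5)[OF assms(1)] assms(2) by force
  moreover have "card {i. i < p \<and> int q - x ! i \<ge> 1} \<le> p"
    by (rule order.trans[OF card_mono[of "{..<p}"]]) auto
  ultimately show "y!0 \<le> int p" "0 \<le> y!0" by auto
qed

lemma core_a:
  fixes p q :: nat and a b x y :: "int list"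
  assumes la: "length a = p" and lb: "length b = q" and p1: "1 \<le> p" and q1: "1 \<le> q"
    and a0: "a!0 \<ge> 1" and astr: "\<forall>i. 0 < i \<longrightarrow> i < p \<longrightarrow> a!i \<le> a!0 - 1"
    and bnn: "\<forall>j<q. b!j \<ge> 0" and b0: "b!0 \<ge> 2 * int p + 1"
    and om: "(x,y) \<in> Omega p q"
  shows "\<exists>x' y'. (x',y') \<in> Omega p q \<and> KK (a[0:=a!0-1]) (b[0:=b!0-1]) x' y' < KK a b x y"
proof -
  note Of = Omega_facts[OF om]
  have lx: "length x = p" and ly: "length y = q" using Of by auto
  have y0: "y!0 \<le> int p" using y0_le[OF om q1] by simp
  define U where "U = map2 (-) a x"
  define V where "V = map2 (-) b y"
  have lU: "length U = p" and lV: "length V = q" using la lb lx ly by (auto simp: U_def V_def)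
  have U_nth: "\<And>i. i < p \<Longrightarrow> U!i = a!i - x!i" using la lx by (simp add: U_def)
  have V_nth: "\<And>j. j < q \<Longrightarrow> V!j = b!j - y!j" using lb ly by (simp add: V_def)
  have V0: "V!0 \<ge> int p + 1" using V_nth[of 0] q1 b0 y0 by simp
  show ?thesis
  proof (cases "x!0 < a!0")
    case True
    have U0: "U!0 \<ge> 1" using U_nth[of 0] p1 True by simp
    define U' where "U' = map2 (-) (a[0:=a!0-1]) x"
    define V' where "V' = map2 (-) (b[0:=b!0-1]) y"
    have lU': "length U' = p" and lV': "length V' = q" using la lb lx ly by (auto simp: U'_def V'_def)
    have U'_nth: "\<And>i. i < p \<Longrightarrow> U'!i = (if i = 0 then U!0 - 1 else U!i)"
      using la lx U_nth by (auto simp: U'_def nth_list_update)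
    have V'_nth: "\<And>j. j < q \<Longrightarrow> V'!j = (if j = 0 then V!0 - 1 else V!j)"
      using lb ly V_nth by (auto simp: V'_def nth_list_update)
    obtain R where R: "mset (map abs U) = add_mset (abs (U!0)) R" "mset (map abs U') = add_mset (abs (U!0 - 1)) R"
      using one_upd[of "map abs U'" "map abs U" 0] lU lU' U'_nth p1 by auto
    obtain S where S: "mset (map abs V) = add_mset (abs (V!0)) S" "mset (map abs V') = add_mset (abs (V!0 - 1)) S"
      using one_upd[of "map abs V'" "map abs V" 0] lV lV' V'_nth q1 by auto
    have "Gm (mset (map abs U')) < Gm (mset (map abs U))"
      unfolding R using Gm_dec[of "abs (U!0)" R] U0 by simp
    moreover have "Gm (mset (map abs V')) < Gm (mset (map abs V))"
      unfolding S using Gm_dec[of "abs (V!0)" S] V0 p1 by simp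
    ultimately have "KK (a[0:=a!0-1]) (b[0:=b!0-1]) x y < KK a b x y"
      unfolding KK_def U_def V_def U'_def V'_def by linarith
    then show ?thesis using om by blast
  next
    case False
    define m where "m = x!0"
    have m_ge: "m \<ge> a!0" using False m_def by simp
    have m1: "m \<ge> 1" using m_ge a0 by simp
    have mq: "m \<le> int q" using Of(3) p1 m_def by auto
    have xle: "\<And>i j. i \<le> j \<Longrightarrow> j < p \<Longrightarrow> x!j \<le> x!i"
    proof -
      fix i j :: nat assume "i \<le> j" "j < p"
      then show "x!j \<le> x!i" using Of(4) lx
        by (cases "i = j") (auto simp: sorted_wrt_iff_nth_less)
    qed
    define k where "k = (GREATEST i. i < p \<and> x!i = m)"
    have kP: "k < p \<and> x!k = m" unfolding k_def
      by (rule GreatestI_nat[of _ 0 p]) (use p1 m_def in auto)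
    have kmax: "\<And>i. i < p \<Longrightarrow> x!i = m \<Longrightarrow> i \<le> k" unfolding k_def
      by (rule Greatest_le_nat[of _ _ p]) auto
    have below: "\<And>i. i \<le> k \<Longrightarrow> x!i = m"
    proof -
      fix i assume "i \<le> k"
      then have "x!k \<le> x!i" "x!i \<le> x!0" using xle kP by auto
      then show "x!i = m" using kP m_def by simp
    qed
    have above: "\<And>i. k < i \<Longrightarrow> i < p \<Longrightarrow> x!i \<le> m - 1"
    proof -
      fix i assume h: "k < i" "i < p"
      then have "x!i \<le> x!k" using xle by simp
      moreover have "x!i \<noteq> m" using kmax h by force
      ultimately show "x!i \<le> m - 1" using kP by simp
    qed
    define j0 where "j0 = nat (int q - m)"
    have j0q: "j0 < q" and j0i: "int j0 = int q - m" using m1 mq by (auto simp: j0_def)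
    define x' where "x' = x[k := m - 1]"
    define y' where "y' = y[j0 := y!j0 + 1]"
    have lx': "length x' = p" and ly': "length y' = q" using lx ly by (auto simp: x'_def y'_def)
    have Sx: "{i. i < p \<and> int q - x!i \<ge> int (j0+1)} = {Suc k..<p}"
      using below above j0i by (auto simp: not_less_eq_eq[symmetric]) (smt (verit) below not_le)
    have yj0: "y!j0 = int (p - 1 - k)"
      using Of(5) j0q Sx by (metis One_nat_def Suc_eq_plus1 atLeastAtMost_iff card_atLeastLessThan diff_Suc_1 diff_Suc_eq_diff_pred le_add2 less_eq_Suc_le)
    have x'_nth: "\<And>i. i < p \<Longrightarrow> x'!i = (if i = k then m - 1 else x!i)"
      using lx by (simp add: x'_def nth_list_update)
    have y'_nth: "\<And>j. j < q \<Longrightarrow> y'!j = (if j = j0 then y!j0 + 1 else y!j)"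
      using ly by (simp add: y'_def nth_list_update)
    have bnd': "\<forall>i<p. 0 \<le> x'!i \<and> x'!i \<le> int q"
      using Of(3) x'_nth m1 mq by auto
    have sorted': "sorted_wrt (\<ge>) x'"
    proof (unfold sorted_wrt_iff_nth_less, intro allI impI)
      fix i j assume h: "i < j" "j < length x'"
      have jp: "j < p" "i < p" using h lx' by auto
      show "x'!j \<le> x'!i"
      proof (cases "i = k")
        case True
        then show ?thesis using x'_nth jp h above[of j] by auto
      next
        case ik: False
        show ?thesis
        proof (cases "j = k")
          case True
          then show ?thesis using x'_nth jp h below[of i] ik by auto
        next
          case False
          then show ?thesis using x'_nth jp h xle[of i j] ik by auto
        qed
      qed
    qed
    have card': "\<forall>j\<in>{1..q}. y' ! (j - 1) = int (card {i. i < p \<and> int q - x' ! i \<ge> int j})"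
    proof
      fix j assume jq: "j \<in> {1..q}"
      let ?S = "{i. i < p \<and> int q - x ! i \<ge> int j}"
      let ?S' = "{i. i < p \<and> int q - x' ! i \<ge> int j}"
      have fin: "finite ?S" by (rule finite_subset[of _ "{..<p}"]) auto
      have old: "y!(j-1) = int (card ?S)" using Of(5) jq by blast
      show "y' ! (j - 1) = int (card ?S')"
      proof (cases "j = j0 + 1")
        case True
        have "?S' = insert k ?S" using x'_nth kP j0i True by auto
        moreover have "k \<notin> ?S" using kP j0i True by auto
        ultimately have "card ?S' = Suc (card ?S)" using fin by simp
        then show ?thesis using old y'_nth True j0q by simp
      next
        case False
        have "?S' = ?S" using x'_nth kP j0i False by (auto split: if_splits)
        moreover have "j - 1 \<noteq> j0" using False jq by auto
        ultimately show ?thesis using old y'_nth jq by auto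
      qed
    qed
    have om': "(x',y') \<in> Omega p q"
      unfolding Omega_def using lx' ly' bnd' sorted' card' by blast
    define U' where "U' = map2 (-) (a[0:=a!0-1]) x'"
    define V' where "V' = map2 (-) (b[0:=b!0-1]) y'"
    have lU': "length U' = p" and lV': "length V' = q" using la lb lx' ly' by (auto simp: U'_def V'_def)
    have U'_nth: "\<And>i. i < p \<Longrightarrow> U'!i = (if i = 0 then a!0 - 1 else a!i) - (if i = k then m - 1 else x!i)"
      using la lx' x'_nth by (auto simp: U'_def nth_list_update)
    have V'_nth: "\<And>j. j < q \<Longrightarrow> V'!j = (if j = 0 then b!0 - 1 else b!j) - (if j = j0 then y!j0 + 1 else y!j)"
      using lb ly' y'_nth by (auto simp: V'_def nth_list_update)
    have x0m: "x!0 = m" using m_def by simp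
    have Ga: "Gm (mset (map abs U')) \<le> Gm (mset (map abs U))"
    proof (cases "k = 0")
      case True
      have "map abs U' = map abs U"
        by (rule nth_equalityI) (use lU lU' U_nth U'_nth True x0m in auto)
      then show ?thesis by simp
    next
      case False
      have kp: "k < p" using kP by simp
      obtain R where R: "mset (map abs U) = add_mset (abs (U!k)) (add_mset (abs (U!0)) R)"
         "mset (map abs U') = add_mset (abs (U'!k)) (add_mset (abs (U'!0)) R)"
        using two_upd[of "map abs U'" "map abs U" k 0] lU lU' U_nth U'_nth False kp p1 by auto
      have e0: "U'!0 = U!0 - 1" "U!0 = a!0 - m" using U'_nth U_nth p1 x0m False by auto
      have ek: "U'!k = U!k + 1" "U!k = a!k - m" using U'_nth U_nth kp kP False by auto
      have ak: "a!k \<le> a!0 - 1" using astr False kp by simp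
      have A0: "abs (U'!0) = abs (U!0) + 1" using e0 m_ge by simp
      have Ak: "abs (U'!k) = abs (U!k) - 1" using ek ak m_ge by simp
      have "abs (U!0) + 1 \<le> abs (U!k)" using e0 ek ak m_ge by simp
      from Gm_transfer(1)[OF this, of R] show ?thesis unfolding R A0 Ak .
    qed
    have V0': "V!0 \<ge> 2" using V0 p1 by simp
    have Gb: "Gm (mset (map abs V')) < Gm (mset (map abs V))"
    proof (cases "j0 = 0")
      case True
      obtain S where S: "mset (map abs V) = add_mset (abs (V!0)) S"
         "mset (map abs V') = add_mset (abs (V'!0)) S"
        using one_upd[of "map abs V'" "map abs V" 0] lV lV' V_nth V'_nth True q1 by auto
      have e: "abs (V'!0) = abs (V!0) - 1 - 1" using V'_nth V_nth q1 True V0' by auto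
      have "Gm (add_mset (abs (V!0) - 1 - 1) S) < Gm (add_mset (abs (V!0) - 1) S)"
        by (rule Gm_dec) (use V0' in simp)
      also have "\<dots> < Gm (add_mset (abs (V!0)) S)"
        by (rule Gm_dec) (use V0' in simp)
      finally show ?thesis unfolding S e .
    next
      case False
      obtain S where S: "mset (map abs V) = add_mset (abs (V!0)) (add_mset (abs (V!j0)) S)"
         "mset (map abs V') = add_mset (abs (V'!0)) (add_mset (abs (V'!j0)) S)"
        using two_upd[of "map abs V'" "map abs V" 0 j0] lV lV' V_nth V'_nth False q1 j0q by auto
      have e0: "abs (V'!0) = abs (V!0) - 1" using V'_nth V_nth q1 False V0' by auto
      have ej: "V'!j0 = V!j0 - 1" using V'_nth V_nth j0q False by auto
      show ?thesis
      proof (cases "V!j0 \<ge> 1")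
        case True
        have ej': "abs (V'!j0) = abs (V!j0) - 1" using ej True by simp
        have "Gm (add_mset (abs (V!0) - 1) (add_mset (abs (V!j0) - 1) S))
              < Gm (add_mset (abs (V!0)) (add_mset (abs (V!j0) - 1) S))"
          by (rule Gm_dec) (use V0' in simp)
        also have "\<dots> = Gm (add_mset (abs (V!j0) - 1) (add_mset (abs (V!0)) S))"
          by (simp add: add_mset_commute)
        also have "\<dots> < Gm (add_mset (abs (V!j0)) (add_mset (abs (V!0)) S))"
          by (rule Gm_dec) (use True in simp)
        also have "\<dots> = Gm (add_mset (abs (V!0)) (add_mset (abs (V!j0)) S))"
          by (simp add: add_mset_commute)
        finally show ?thesis unfolding S e0 ej' .
      next
        case False
        have ej': "abs (V'!j0) = abs (V!j0) + 1" using ej False by simp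
        have "V!j0 = b!j0 - y!j0" using V_nth j0q by simp
        then have "abs (V!j0) \<le> int p - 1" using False bnn j0q yj0 kP by auto
        then have h2: "abs (V!j0) + 2 \<le> abs (V!0)" using V0 by simp
        then have h1: "abs (V!j0) + 1 \<le> abs (V!0)" by simp
        from Gm_transfer(2)[OF h1 h2, of S] show ?thesis unfolding S e0 ej' .
      qed
    qed
    have "KK (a[0:=a!0-1]) (b[0:=b!0-1]) x' y' < KK a b x y"
      using Ga Gb unfolding KK_def U_def V_def U'_def V'_def by linarith
    then show ?thesis using om' by blast
  qed
qed



lemma wsub_beta:
  assumes "length a = p" "length b = q" "1 \<le> p" "1 \<le> q"
  shows "wsub (a,b) (beta p q) = (a[0:=a!0-1], b[0:=b!0-1])"
proof -
  have "map2 (-) a (1 # replicate (p-1) 0) = a[0:=a!0-1]"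
    by (rule nth_equalityI) (use assms in \<open>auto simp: nth_list_update nth_Cons split: nat.splits\<close>)
  moreover have "map2 (-) b (1 # replicate (q-1) 0) = b[0:=b!0-1]"
    by (rule nth_equalityI) (use assms in \<open>auto simp: nth_list_update nth_Cons split: nat.splits\<close>)
  ultimately show ?thesis unfolding wsub_def beta_def by simp
qed

lemma knorm_wsub:
  assumes "length a = p" "length x = p" "length b = q" "length y = q"
  shows "knorm p q (wsub (a,b) (x,y)) = sqrt (of_int (KK a b x y + Tq p + Tq q))"
  using knorm_eq[of "map2 (-) a x" p "map2 (-) b y" q] assms
  unfolding wsub_def KK_def by simp

lemma Omega_finite: "finite (Omega p q)"
proof -
  have "Omega p q \<subseteq> {xs. set xs \<subseteq> {0..int q} \<and> length xs = p} \<times> {ys. set ys \<subseteq> {0..int p} \<and> length ys = q}"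
  proof
    fix t assume t: "t \<in> Omega p q"
    obtain x y where xy: "t = (x,y)" by (cases t)
    note Of = Omega_facts[OF t[unfolded xy]]
    have "set x \<subseteq> {0..int q}" using Of(1,3) by (auto simp: in_set_conv_nth)
    moreover have "set y \<subseteq> {0..int p}"
    proof
      fix z assume "z \<in> set y"
      then obtain j where j: "j < q" "z = y!j" using Of(2) by (auto simp: in_set_conv_nth)
      then have "z = int (card {i. i < p \<and> int q - x ! i \<ge> int (j+1)})" using Of(5) by force
      moreover have "card {i. i < p \<and> int q - x ! i \<ge> int (j+1)} \<le> p"
        by (rule order.trans[OF card_mono[of "{..<p}"]]) auto
      ultimately show "z \<in> {0..int p}" by auto
    qed
    ultimately show "t \<in> {xs. set xs \<subseteq> {0..int q} \<and> length xs = p} \<times> {ys. set ys \<subseteq> {0..int p} \<and> length ys = q}"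
      using Of xy by auto
  qed
  moreover have "finite ({xs. set xs \<subseteq> {0..int q} \<and> length xs = p} \<times> {ys. set ys \<subseteq> {0..int p} \<and> length ys = q})"
    by (intro finite_cartesian_product finite_lists_length_eq) auto
  ultimately show ?thesis by (rule finite_subset)
qed

lemma Omega_ne: "(replicate p 0, replicate q (int p)) \<in> Omega p q"
proof -
  have "\<And>j. j \<le> q \<Longrightarrow> {i. i < p \<and> int j \<le> int q - replicate p 0 ! i} = {..<p}" by auto
  then show ?thesis unfolding Omega_def by (auto simp: sorted_wrt_iff_nth_less)
qed

lemma case_a:
  fixes p q :: nat and a b :: "int list"
  assumes la: "length a = p" and lb: "length b = q" and p1: "1 \<le> p" and q1: "1 \<le> q"
    and d1: "k_dominant (a, b)" and d2: "k_dominant (wsub (a, b) (beta p q))"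
    and b0: "b!0 \<ge> 2 * int p + 1"
  shows "spin_norm p q (wsub (a, b) (beta p q)) < spin_norm p q (a, b)"
proof -
  have wb: "wsub (a, b) (beta p q) = (a[0:=a!0-1], b[0:=b!0-1])" by (rule wsub_beta[OF la lb p1 q1])
  have a0: "a!0 \<ge> 1"
  proof -
    have "a!0 - 1 \<in> set (a[0:=a!0-1])" using la p1 by (simp add: set_update_memI)
    then show ?thesis using d2 unfolding wb k_dominant_def by auto
  qed
  have astr: "\<forall>i. 0 < i \<longrightarrow> i < p \<longrightarrow> a!i \<le> a!0 - 1"
  proof (intro allI impI)
    fix i :: nat assume i: "0 < i" "i < p"
    have "sorted_wrt (\<ge>) (a[0:=a!0-1])" using d2 unfolding wb k_dominant_def by simp
    then have "a[0:=a!0-1] ! i \<le> a[0:=a!0-1] ! 0" using i la sorted_wrt_nth_less[of "(\<ge>)" "a[0:=a!0-1]" 0 i] by simp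
    then show "a!i \<le> a!0 - 1" using i la by simp
  qed
  have bnn: "\<forall>j<q. b!j \<ge> 0" using d1 lb unfolding k_dominant_def by auto
  let ?f = "\<lambda>t. knorm p q (wsub (a,b) t)"
  let ?g = "\<lambda>t. knorm p q (wsub (a[0:=a!0-1], b[0:=b!0-1]) t)"
  have fin: "finite (?f ` Omega p q)" "finite (?g ` Omega p q)" using Omega_finite by auto
  have ne: "?f ` Omega p q \<noteq> {}" using Omega_ne by blast
  obtain t where t: "t \<in> Omega p q" "?f t = Min (?f ` Omega p q)"
    using Min_in[OF fin(1) ne] by auto
  obtain x y where xy: "t = (x,y)" by (cases t)
  have om: "(x,y) \<in> Omega p q" using t xy by simp
  obtain x' y' where om': "(x',y') \<in> Omega p q"
    and lt: "KK (a[0:=a!0-1]) (b[0:=b!0-1]) x' y' < KK a b x y"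
    using core_a[OF la lb p1 q1 a0 astr bnn b0 om] by blast
  have "spin_norm p q (wsub (a, b) (beta p q)) \<le> ?g (x',y')"
    unfolding spin_norm_def wb using fin(2) om' by (intro Min_le) auto
  also have "?g (x',y') = sqrt (of_int (KK (a[0:=a!0-1]) (b[0:=b!0-1]) x' y' + Tq p + Tq q))"
    by (rule knorm_wsub) (use la lb Omega_facts[OF om'] in auto)
  also have "\<dots> < sqrt (of_int (KK a b x y + Tq p + Tq q))"
    using lt by simp
  also have "\<dots> = ?f (x,y)"
    by (rule knorm_wsub[symmetric]) (use la lb Omega_facts[OF om] in auto)
  also have "\<dots> = spin_norm p q (a,b)" unfolding spin_norm_def using t xy by simp
  finally show ?thesis .
qed



lemma count_ge:
  fixes x :: "int list"
  assumes s: "sorted_wrt (\<ge>) x" and l: "length x = p" and i: "1 \<le> i" "i \<le> p"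
  shows "(i \<le> card {l. l < p \<and> x!l \<ge> t}) \<longleftrightarrow> (x!(i-1) \<ge> t)"
proof -
  have xle: "\<And>u v. u \<le> v \<Longrightarrow> v < p \<Longrightarrow> x!v \<le> x!u"
  proof -
    fix u v :: nat assume "u \<le> v" "v < p"
    then show "x!v \<le> x!u" using s l
      by (cases "u = v") (auto simp: sorted_wrt_iff_nth_less)
  qed
  show ?thesis
  proof
    assume h: "i \<le> card {l. l < p \<and> x!l \<ge> t}"
    show "x!(i-1) \<ge> t"
    proof (rule ccontr)
      assume "\<not> x!(i-1) \<ge> t"
      then have "{l. l < p \<and> x!l \<ge> t} \<subseteq> {..<i-1}"
        using xle[of "i-1"] by (auto simp: not_less) (meson le_less_trans not_le order.trans)
      then have "card {l. l < p \<and> x!l \<ge> t} \<le> i - 1"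
        by (metis card_lessThan card_mono finite_lessThan)
      then show False using h i by simp
    qed
  next
    assume h: "x!(i-1) \<ge> t"
    have "{..<i} \<subseteq> {l. l < p \<and> x!l \<ge> t}"
    proof
      fix l assume "l \<in> {..<i}"
      then have "l \<le> i - 1" "i - 1 < p" using i by auto
      then show "l \<in> {l. l < p \<and> x!l \<ge> t}" using xle[of l "i-1"] h by auto
    qed
    then have "card {..<i} \<le> card {l. l < p \<and> x!l \<ge> t}"
      by (rule card_mono[rotated]) auto
    then show "i \<le> card {l. l < p \<and> x!l \<ge> t}" by simp
  qed
qed

lemma count_compl:
  fixes x :: "int list"
  shows "card {l. l < p \<and> x!l \<ge> t} = p - card {l. l < p \<and> x!l \<le> t - 1}"
proof -
  have "{..<p} = {l. l < p \<and> x!l \<ge> t} \<union> {l. l < p \<and> x!l \<le> t - 1}" by auto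
  moreover have "{l. l < p \<and> x!l \<ge> t} \<inter> {l. l < p \<and> x!l \<le> t - 1} = {}" by auto
  ultimately have "p = card {l. l < p \<and> x!l \<ge> t} + card {l. l < p \<and> x!l \<le> t - 1}"
    by (metis (no_types, lifting) card_Un_disjoint card_lessThan finite_Un finite_lessThan)
  then show ?thesis by simp
qed

lemma Omega_swap:
  assumes om: "(x,y) \<in> Omega p q"
  shows "(y,x) \<in> Omega q p"
proof -
  note Of = Omega_facts[OF om]
  have yj: "\<And>j. j < q \<Longrightarrow> y!j = int (card {i. i < p \<and> x!i \<le> int q - int j - 1})"
  proof -
    fix j assume "j < q"
    then have "y!j = int (card {i. i < p \<and> int q - x ! i \<ge> int (j+1)})" using Of(5) by force
    moreover have "{i. i < p \<and> int q - x ! i \<ge> int (j+1)} = {i. i < p \<and> x!i \<le> int q - int j - 1}" by auto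
    ultimately show "y!j = int (card {i. i < p \<and> x!i \<le> int q - int j - 1})" by simp
  qed
  have cardle: "\<And>P. card {i. i < p \<and> P i} \<le> p"
    by (rule order.trans[OF card_mono[of "{..<p}"]]) auto
  have bnd: "\<forall>j<q. 0 \<le> y!j \<and> y!j \<le> int p" using yj cardle by auto
  have sy: "sorted_wrt (\<ge>) y"
  proof (unfold sorted_wrt_iff_nth_less, intro allI impI)
    fix j j' assume h: "j < j'" "j' < length y"
    have "card {i. i < p \<and> x!i \<le> int q - int j' - 1} \<le> card {i. i < p \<and> x!i \<le> int q - int j - 1}"
      by (rule card_mono) (use h in auto)
    then show "y!j' \<le> y!j" using yj h Of(2) by simp
  qed
  have cx: "\<forall>i\<in>{1..p}. x ! (i - 1) = int (card {j. j < q \<and> int p - y ! j \<ge> int i})"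
  proof
    fix i assume i: "i \<in> {1..p}"
    define t where "t = x!(i-1)"
    have t: "0 \<le> t" "t \<le> int q" using Of(3) i by (auto simp: t_def)
    have eq: "\<And>j. j < q \<Longrightarrow> (int p - y!j \<ge> int i) \<longleftrightarrow> t \<ge> int q - int j"
    proof -
      fix j assume j: "j < q"
      have "int p - y!j = int (card {l. l < p \<and> x!l \<ge> int q - int j})"
        using yj[OF j] count_compl[where p=p and x=x and t="int q - int j"] cardle by simp
      then show "(int p - y!j \<ge> int i) \<longleftrightarrow> t \<ge> int q - int j"
        using count_ge[OF Of(4) Of(1), where i=i and t="int q - int j"] i t_def by simp
    qed
    have "{j. j < q \<and> int p - y ! j \<ge> int i} = {nat (int q - t)..<q}"
      using eq t by auto
    then show "x ! (i - 1) = int (card {j. j < q \<and> int p - y ! j \<ge> int i})"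
      using t t_def by simp
  qed
  show ?thesis unfolding Omega_def using Of(1,2) bnd sy cx by blast
qed



lemma spin_swap:
  assumes la: "length a = p" and lb: "length b = q"
  shows "spin_norm q p (b,a) = spin_norm p q (a,b)"
proof -
  have val: "knorm q p (wsub (b,a) (y,x)) = knorm p q (wsub (a,b) (x,y))" if om: "(x,y) \<in> Omega p q" for x y
  proof -
    note Of = Omega_facts[OF om]
    have "knorm q p (wsub (b,a) (y,x)) = sqrt (of_int (KK b a y x + Tq q + Tq p))"
      by (rule knorm_wsub) (use la lb Of in auto)
    also have "\<dots> = sqrt (of_int (KK a b x y + Tq p + Tq q))" unfolding KK_def by (simp add: algebra_simps)
    also have "\<dots> = knorm p q (wsub (a,b) (x,y))"
      by (rule knorm_wsub[symmetric]) (use la lb Of in auto)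
    finally show ?thesis .
  qed
  have "(\<lambda>t. knorm q p (wsub (b,a) t)) ` Omega q p = (\<lambda>t. knorm p q (wsub (a,b) t)) ` Omega p q"
  proof
    show "(\<lambda>t. knorm q p (wsub (b,a) t)) ` Omega q p \<subseteq> (\<lambda>t. knorm p q (wsub (a,b) t)) ` Omega p q"
    proof
      fix r assume "r \<in> (\<lambda>t. knorm q p (wsub (b,a) t)) ` Omega q p"
      then obtain y x where yx: "(y,x) \<in> Omega q p" "r = knorm q p (wsub (b,a) (y,x))" by auto
      then have om: "(x,y) \<in> Omega p q" using Omega_swap by blast
      then show "r \<in> (\<lambda>t. knorm p q (wsub (a,b) t)) ` Omega p q" using val[OF om] yx by force
    qed
  next
    show "(\<lambda>t. knorm p q (wsub (a,b) t)) ` Omega p q \<subseteq> (\<lambda>t. knorm q p (wsub (b,a) t)) ` Omega q p"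
    proof
      fix r assume "r \<in> (\<lambda>t. knorm p q (wsub (a,b) t)) ` Omega p q"
      then obtain x y where xy: "(x,y) \<in> Omega p q" "r = knorm p q (wsub (a,b) (x,y))" by auto
      then have om: "(y,x) \<in> Omega q p" using Omega_swap by blast
      then show "r \<in> (\<lambda>t. knorm q p (wsub (b,a) t)) ` Omega q p" using val[OF xy(1)] xy by force
    qed
  qed
  then show ?thesis unfolding spin_norm_def by simp
qed

theorem proposition3p1:
  fixes p q :: nat and a b :: "int list"
  assumes "1 \<le> p" and "p \<le> q"
    and "length a = p" and "length b = q"
    and "k_dominant (a, b)"
    and "u_large p q (a, b)"
    and "k_dominant (wsub (a, b) (beta p q))"
  shows "(b ! 0 \<ge> 2 * int p + 1 \<longrightarrow> spin_norm p q (a, b) > spin_norm p q (wsub (a, b) (beta p q)))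
       \<and> (a ! 0 \<ge> 2 * int q + 1 \<longrightarrow> spin_norm p q (a, b) > spin_norm p q (wsub (a, b) (beta p q)))"
proof (intro conjI impI)
  have q1: "1 \<le> q" using assms(1,2) by simp
  {
    assume "b ! 0 \<ge> 2 * int p + 1"
    then show "spin_norm p q (a, b) > spin_norm p q (wsub (a, b) (beta p q))"
      using case_a[OF assms(3,4,1) q1 assms(5,7)] by simp
  }
  {
    assume h: "a ! 0 \<ge> 2 * int q + 1"
    have w1: "wsub (a,b) (beta p q) = (a[0:=a!0-1], b[0:=b!0-1])" by (rule wsub_beta[OF assms(3,4,1) q1])
    have w2: "wsub (b,a) (beta q p) = (b[0:=b!0-1], a[0:=a!0-1])" by (rule wsub_beta[OF assms(4,3) q1 assms(1)])
    have d1: "k_dominant (b,a)" using assms(5) unfolding k_dominant_def by auto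
    have d2: "k_dominant (wsub (b,a) (beta q p))" using assms(7) unfolding w1 w2 k_dominant_def by auto
    have "spin_norm q p (wsub (b,a) (beta q p)) < spin_norm q p (b,a)"
      by (rule case_a[OF assms(4,3) q1 assms(1) d1 d2 h])
    moreover have "spin_norm q p (b,a) = spin_norm p q (a,b)" by (rule spin_swap[OF assms(3,4)])
    moreover have "spin_norm q p (wsub (b,a) (beta q p)) = spin_norm p q (wsub (a,b) (beta p q))"
      unfolding w1 w2 by (rule spin_swap) (use assms(3,4) in auto)
    ultimately show "spin_norm p q (a, b) > spin_norm p q (wsub (a, b) (beta p q))" by simp
  }
qed


end
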